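(* Let $U$ be a finite-dimensional complex vector space with basis $\mathbb B$, $w:U\to U$ linear, and $A=[w]_{(\mathbb B,\preceq)}$ the matrix of $w$ with respect to an arbitrary total ordering $\preceq$ of $\mathbb B$. Then $w$ acts on $(U,\mathbb B)$ by some bijection up to lower-order terms if and only if there exist permutation matrices $P_1,P_2$ such that $P_1AP_2$ is an upper-triangular integer matrix whose diagonal entries are all $\pm1$.
   Context: $w$ acts on $(U,\mathbb B)$ by some bijection up to lower-order terms if there exist a bijection $\xi:\mathbb B\to\mathbb B$ and a preorder $\le$ on $\mathbb B$ such that for every $x\in\mathbb B$ there are integers $a_y$ with $w(x)=\pm\xi(x)+\sum_{y<x}a_y\xi(y)$, the sign depending only on the equivalence class of $x$ under the equivalence relation induced by $\le$. *)

theory Defs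
  imports "HOL-Analysis.Analysis" "Jordan_Normal_Form.Matrix"
begin

definition acts_by_bij_up_to_lower ::
  "(complex \<Rightarrow> 'u::ab_group_add \<Rightarrow> 'u) \<Rightarrow> 'u set \<Rightarrow> ('u \<Rightarrow> 'u) \<Rightarrow> bool" where
  "acts_by_bij_up_to_lower scl B w \<longleftrightarrow>
    (\<exists>\<xi> R sgn.
       bij_betw \<xi> B B \<and> preorder_on B R \<and>
       (\<forall>x\<in>B. sgn x = (1::int) \<or> sgn x = -1) \<and>
       (\<forall>x\<in>B. \<forall>y\<in>B. (x, y) \<in> R \<and> (y, x) \<in> R \<longrightarrow> sgn x = sgn y) \<and>
       (\<forall>x\<in>B. \<exists>a :: 'u \<Rightarrow> int.
          w x = scl (of_int (sgn x)) (\<xi> x) +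
                (\<Sum>y\<in>{y\<in>B. (y, x) \<in> R \<and> (x, y) \<notin> R}. scl (of_int (a y)) (\<xi> y))))"

text \<open>Matrix of \<open>w\<close> with respect to the basis \<open>B\<close> ordered by the enumeration
  \<open>e : {0..<card B} \<rightarrow> B\<close> (i.e. \<open>e 0 \<prec> e 1 \<prec> \<dots>\<close>): column \<open>j\<close> holds the coordinates of \<open>w (e j)\<close>.\<close>
definition matrix_wrt ::
  "(complex \<Rightarrow> 'u::ab_group_add \<Rightarrow> 'u) \<Rightarrow> 'u set \<Rightarrow> (nat \<Rightarrow> 'u) \<Rightarrow> ('u \<Rightarrow> 'u) \<Rightarrow> complex mat" where
  "matrix_wrt scl B e w =
     mat (card B) (card B) (\<lambda>(i, j). module.representation scl B (w (e j)) (e i))"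

definition perm_matrix :: "nat \<Rightarrow> (nat \<Rightarrow> nat) \<Rightarrow> complex mat" where
  "perm_matrix n \<sigma> = mat n n (\<lambda>(i, j). if i = \<sigma> j then 1 else 0)"

definition is_permutation_matrix :: "nat \<Rightarrow> complex mat \<Rightarrow> bool" where
  "is_permutation_matrix n P \<longleftrightarrow> (\<exists>\<sigma>. \<sigma> permutes {..<n} \<and> P = perm_matrix n \<sigma>)"

definition upper_unitriangular_int_pm :: "complex mat \<Rightarrow> bool" where
  "upper_unitriangular_int_pm M \<longleftrightarrow>
     dim_row M = dim_col M \<and> upper_triangular M \<and>
     (\<forall>i < dim_row M. \<forall>j < dim_col M. M $$ (i, j) \<in> \<int>) \<and>
     (\<forall>i < dim_row M. M $$ (i, i) = 1 \<or> M $$ (i, i) = -1)"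

end

theory Submission imports Defs begin

lemma perm_mat_mult_entry:
  assumes s: "\<sigma> permutes {..<n}" and t: "\<tau> permutes {..<n}"
    and M: "M \<in> carrier_mat n n" and i: "i < n" and j: "j < n"
  shows "(perm_matrix n \<sigma> * M * perm_matrix n \<tau>) $$ (i, j) = M $$ (Hilbert_Choice.inv \<sigma> i, \<tau> j)"
proof -
  have ti: "\<tau> j < n" using permutes_in_image[OF t] j by auto
  have si: "Hilbert_Choice.inv \<sigma> i < n" using permutes_in_image[OF permutes_inv[OF s]] i by auto
  have "(perm_matrix n \<sigma> * M * perm_matrix n \<tau>) $$ (i, j)
      = (\<Sum>k\<in>{0..<n}. (perm_matrix n \<sigma> * M) $$ (i, k) * (if k = \<tau> j then 1 else 0))"
    using M i j by (simp add: perm_matrix_def scalar_prod_def)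
  also have "\<dots> = (perm_matrix n \<sigma> * M) $$ (i, \<tau> j)"
    using ti by (simp add: if_distrib cong: if_cong)
  also have "\<dots> = (\<Sum>k\<in>{0..<n}. (if i = \<sigma> k then 1 else 0) * M $$ (k, \<tau> j))"
    using M i ti by (simp add: perm_matrix_def scalar_prod_def)
  also have "\<dots> = (\<Sum>k\<in>{0..<n}. (if k = Hilbert_Choice.inv \<sigma> i then M $$ (k, \<tau> j) else 0))"
  proof (intro sum.cong refl)
    fix k
    have eq: "(i = \<sigma> k) \<longleftrightarrow> (k = Hilbert_Choice.inv \<sigma> i)" using permutes_inverses[OF s] by metis
    show "(if i = \<sigma> k then 1 else 0) * M $$ (k, \<tau> j) = (if k = Hilbert_Choice.inv \<sigma> i then M $$ (k, \<tau> j) else 0)"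
      unfolding eq by simp
  qed
  also have "\<dots> = M $$ (Hilbert_Choice.inv \<sigma> i, \<tau> j)" using si by simp
  finally show ?thesis .
qed

lemma pos_exists:
  fixes key :: "'a \<Rightarrow> 'b::linorder"
  assumes fin: "finite B" and inj: "inj_on key B"
  defines "pos \<equiv> \<lambda>x. card {y\<in>B. key y < key x}"
  shows "bij_betw pos B {..<card B}"
    and "\<And>x y. x \<in> B \<Longrightarrow> y \<in> B \<Longrightarrow> key y < key x \<Longrightarrow> pos y < pos x"
proof -
  show mono: "pos y < pos x" if "x \<in> B" "y \<in> B" "key y < key x" for x y
  proof -
    have "{z\<in>B. key z < key y} \<subset> {z\<in>B. key z < key x}"
      using that by auto
    then show ?thesis unfolding pos_def using fin by (intro psubset_card_mono) auto
  qed
  have injp: "inj_on pos B"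
  proof (rule inj_onI)
    fix x y assume "x \<in> B" "y \<in> B" "pos x = pos y"
    then show "x = y" using mono inj[unfolded inj_on_def]
      by (metis less_irrefl linorder_neqE)
  qed
  have "pos ` B \<subseteq> {..<card B}"
  proof
    fix z assume "z \<in> pos ` B"
    then obtain x where x: "x \<in> B" "z = pos x" by auto
    have "{y\<in>B. key y < key x} \<subset> B" using x by auto
    then show "z \<in> {..<card B}" using x fin unfolding pos_def by (auto intro: psubset_card_mono)
  qed
  moreover have "card (pos ` B) = card B" using card_image[OF injp] .
  ultimately have "pos ` B = {..<card B}"
    by (intro card_subset_eq) auto
  then show "bij_betw pos B {..<card B}" using injp by (simp add: bij_betw_def)
qed

lemma rep_facts:
  assumes "finite_dimensional_vector_space scl B"
  shows rep_add: "module.representation scl B (u + v) b = module.representation scl B u b + module.representation scl B v b"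
    and rep_scale: "module.representation scl B (scl c v) b = c * module.representation scl B v b"
    and rep_sum: "module.representation scl B (sum f I) b = (\<Sum>i\<in>I. module.representation scl B (f i) b)"
    and rep_basis: "x \<in> B \<Longrightarrow> module.representation scl B x b = (if b = x then 1 else 0)"
    and rep_expand: "bij_betw g I B \<Longrightarrow> v = (\<Sum>i\<in>I. scl (module.representation scl B v (g i)) (g i))"
proof -
  interpret V: finite_dimensional_vector_space scl B by fact
  have sp: "\<And>z. z \<in> V.span B" using V.span_Basis by auto
  show "V.representation B (u + v) b = V.representation B u b + V.representation B v b"
    using V.representation_add[OF V.independent_Basis sp sp] by simp
  show "V.representation B (scl c v) b = c * V.representation B v b"
    using V.representation_scale[OF V.independent_Basis sp] by simp
  show "V.representation B (sum f I) b = (\<Sum>i\<in>I. V.representation B (f i) b)"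
    by (simp add: V.representation_sum[OF V.independent_Basis sp])
  show "x \<in> B \<Longrightarrow> V.representation B x b = (if b = x then 1 else 0)"
    using V.representation_basis[OF V.independent_Basis] by simp
  assume g: "bij_betw g I B"
  have "v = (\<Sum>b\<in>B. scl (V.representation B v b) b)"
    using V.sum_representation_eq[OF V.independent_Basis sp V.finite_Basis] by simp
  also have "\<dots> = (\<Sum>i\<in>I. scl (V.representation B v (g i)) (g i))"
    using sum.reindex_bij_betw[OF g, of "\<lambda>b. scl (V.representation B v b) b"] by simp
  finally show "v = (\<Sum>i\<in>I. scl (V.representation B v (g i)) (g i))" .
qed

theorem corollaryA3:
  fixes scl :: "complex \<Rightarrow> 'u::ab_group_add \<Rightarrow> 'u"
    and B :: "'u set" and w :: "'u \<Rightarrow> 'u" and e :: "nat \<Rightarrow> 'u"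
  assumes "finite_dimensional_vector_space scl B"
    and "Vector_Spaces.linear scl scl w"
    and "bij_betw e {..<card B} B"
  shows "acts_by_bij_up_to_lower scl B w \<longleftrightarrow>
    (\<exists>P1 P2. is_permutation_matrix (card B) P1 \<and> is_permutation_matrix (card B) P2 \<and>
       upper_unitriangular_int_pm (P1 * matrix_wrt scl B e w * P2))"
proof -
  note fd = assms(1)
  interpret V: finite_dimensional_vector_space scl B by fact
  define n where "n = card B"
  define A where "A = matrix_wrt scl B e w"
  define rep where "rep = module.representation scl B"
  have fin: "finite B" using V.finite_Basis .
  have Acar: "A \<in> carrier_mat n n" by (simp add: A_def matrix_wrt_def n_def)
  have Aent: "\<And>i j. i < n \<Longrightarrow> j < n \<Longrightarrow> A $$ (i, j) = rep (w (e j)) (e i)"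
    by (simp add: A_def matrix_wrt_def n_def rep_def)
  have eB: "bij_betw e {..<n} B" using assms(3) by (simp add: n_def)
  define Q where "Q \<longleftrightarrow> (\<exists>p q. p permutes {..<n} \<and> q permutes {..<n} \<and>
     (\<forall>i<n. \<forall>j<n. A $$ (p i, q j) \<in> \<int> \<and> (j < i \<longrightarrow> A $$ (p i, q j) = 0)) \<and>
     (\<forall>i<n. A $$ (p i, q i) = 1 \<or> A $$ (p i, q i) = -1))"
  have dims: "\<And>\<sigma> \<tau>. dim_row (perm_matrix n \<sigma> * A * perm_matrix n \<tau>) = n \<and>
                     dim_col (perm_matrix n \<sigma> * A * perm_matrix n \<tau>) = n"
    by (simp add: perm_matrix_def)
  have RHS: "(\<exists>P1 P2. is_permutation_matrix n P1 \<and> is_permutation_matrix n P2 \<and>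
       upper_unitriangular_int_pm (P1 * A * P2)) \<longleftrightarrow> Q"
  proof
    assume "\<exists>P1 P2. is_permutation_matrix n P1 \<and> is_permutation_matrix n P2 \<and>
       upper_unitriangular_int_pm (P1 * A * P2)"
    then obtain \<sigma> \<tau> where s: "\<sigma> permutes {..<n}" and t: "\<tau> permutes {..<n}"
      and U: "upper_unitriangular_int_pm (perm_matrix n \<sigma> * A * perm_matrix n \<tau>)"
      unfolding is_permutation_matrix_def by blast
    have ent: "\<And>i j. i < n \<Longrightarrow> j < n \<Longrightarrow> (perm_matrix n \<sigma> * A * perm_matrix n \<tau>) $$ (i, j)
        = A $$ (Hilbert_Choice.inv \<sigma> i, \<tau> j)"
      using perm_mat_mult_entry[OF s t Acar] by blast
    show Q unfolding Q_def
    proof (intro exI conjI allI impI)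
      show "Hilbert_Choice.inv \<sigma> permutes {..<n}" using permutes_inv[OF s] .
      show "\<tau> permutes {..<n}" using t .
      fix i assume i: "i < n"
      show "A $$ (Hilbert_Choice.inv \<sigma> i, \<tau> i) = 1 \<or> A $$ (Hilbert_Choice.inv \<sigma> i, \<tau> i) = -1"
        using U i dims ent[OF i i] unfolding upper_unitriangular_int_pm_def by metis
      fix j assume j: "j < n"
      show "A $$ (Hilbert_Choice.inv \<sigma> i, \<tau> j) \<in> \<int>"
        using U i j dims ent[OF i j] unfolding upper_unitriangular_int_pm_def by metis
      assume "j < i"
      then show "A $$ (Hilbert_Choice.inv \<sigma> i, \<tau> j) = 0"
        using U i j dims ent[OF i j] unfolding upper_unitriangular_int_pm_def upper_triangular_def by metis
    qed
  next
    assume Q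
    then obtain p q where p: "p permutes {..<n}" and q: "q permutes {..<n}"
      and H1: "\<forall>i<n. \<forall>j<n. A $$ (p i, q j) \<in> \<int> \<and> (j < i \<longrightarrow> A $$ (p i, q j) = 0)"
      and H2: "\<forall>i<n. A $$ (p i, q i) = 1 \<or> A $$ (p i, q i) = -1"
      unfolding Q_def by blast
    have ip: "Hilbert_Choice.inv p permutes {..<n}" using permutes_inv[OF p] .
    have ent: "\<And>i j. i < n \<Longrightarrow> j < n \<Longrightarrow> (perm_matrix n (Hilbert_Choice.inv p) * A * perm_matrix n q) $$ (i, j)
        = A $$ (p i, q j)"
      using perm_mat_mult_entry[OF ip q Acar] permutes_inv_inv[OF p] by simp
    show "\<exists>P1 P2. is_permutation_matrix n P1 \<and> is_permutation_matrix n P2 \<and>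
       upper_unitriangular_int_pm (P1 * A * P2)"
    proof (intro exI conjI)
      show "is_permutation_matrix n (perm_matrix n (Hilbert_Choice.inv p))"
        using ip unfolding is_permutation_matrix_def by blast
      show "is_permutation_matrix n (perm_matrix n q)"
        using q unfolding is_permutation_matrix_def by blast
      show "upper_unitriangular_int_pm (perm_matrix n (Hilbert_Choice.inv p) * A * perm_matrix n q)"
        unfolding upper_unitriangular_int_pm_def upper_triangular_def
        using dims ent H1 H2 by simp
    qed
  qed
  have LHS: "acts_by_bij_up_to_lower scl B w \<longleftrightarrow> Q"
  proof
    assume Q
    then obtain p q where p: "p permutes {..<n}" and q: "q permutes {..<n}"
      and H1: "\<forall>i<n. \<forall>j<n. A $$ (p i, q j) \<in> \<int> \<and> (j < i \<longrightarrow> A $$ (p i, q j) = 0)"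
      and H2: "\<forall>i<n. A $$ (p i, q i) = 1 \<or> A $$ (p i, q i) = -1"
      unfolding Q_def by blast
    define g where "g = e \<circ> q"
    define h where "h = e \<circ> p"
    have g: "bij_betw g {..<n} B" unfolding g_def using bij_betw_trans[OF permutes_imp_bij[OF q] eB] .
    have h: "bij_betw h {..<n} B" unfolding h_def using bij_betw_trans[OF permutes_imp_bij[OF p] eB] .
    define ic where "ic = inv_into {..<n} g"
    have ic: "bij_betw ic B {..<n}" unfolding ic_def using bij_betw_inv_into[OF g] .
    have g_ic: "\<And>x. x \<in> B \<Longrightarrow> g (ic x) = x" unfolding ic_def using bij_betw_inv_into_right[OF g] .
    have ic_g: "\<And>k. k < n \<Longrightarrow> ic (g k) = k" unfolding ic_def using bij_betw_inv_into_left[OF g] by simp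
    have icn: "\<And>x. x \<in> B \<Longrightarrow> ic x < n" using bij_betw_apply[OF ic] by simp
    define \<xi> where "\<xi> = h \<circ> ic"
    have \<xi>: "bij_betw \<xi> B B" unfolding \<xi>_def using bij_betw_trans[OF ic h] .
    define R where "R = {(x, y). x \<in> B \<and> y \<in> B \<and> ic x \<le> ic y}"
    define T where "T i j = A $$ (p i, q j)" for i j
    define sgn where "sgn x = (if T (ic x) (ic x) = 1 then (1::int) else -1)" for x
    show "acts_by_bij_up_to_lower scl B w"
      unfolding acts_by_bij_up_to_lower_def
    proof (intro exI conjI ballI impI)
      show "bij_betw \<xi> B B" by fact
      show "preorder_on B R" unfolding preorder_on_def refl_on_def trans_def R_def by auto
      show "sgn x = 1 \<or> sgn x = -1" for x unfolding sgn_def by simp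
      show "sgn x = sgn y" if "x \<in> B" "y \<in> B" "(x, y) \<in> R \<and> (y, x) \<in> R" for x y
      proof -
        have "ic x = ic y" using that unfolding R_def by auto
        then show ?thesis unfolding sgn_def by simp
      qed
      fix x assume x: "x \<in> B"
      define k where "k = ic x"
      have k: "k < n" using icn[OF x] k_def by simp
      have xg: "x = g k" using g_ic[OF x] k_def by simp
      define a where "a y = (SOME m. of_int m = T (ic y) k)" for y
      have aT: "of_int (a y) = T (ic y) k" if "y \<in> B" for y
      proof -
        have "T (ic y) k \<in> \<int>" using H1 icn[OF that] k unfolding T_def by blast
        then have "\<exists>m. of_int m = T (ic y) k" unfolding Ints_def by auto
        then show ?thesis unfolding a_def by (rule someI_ex)
      qed
      have set_eq: "{y \<in> B. (y, x) \<in> R \<and> (x, y) \<notin> R} = g ` {..<k}"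
      proof
        show "{y \<in> B. (y, x) \<in> R \<and> (x, y) \<notin> R} \<subseteq> g ` {..<k}"
        proof
          fix y assume "y \<in> {y \<in> B. (y, x) \<in> R \<and> (x, y) \<notin> R}"
          then have y: "y \<in> B" "ic y < k" unfolding R_def k_def using x by auto
          then show "y \<in> g ` {..<k}" using g_ic[OF y(1)] by (metis image_eqI lessThan_iff)
        qed
        show "g ` {..<k} \<subseteq> {y \<in> B. (y, x) \<in> R \<and> (x, y) \<notin> R}"
        proof
          fix y assume "y \<in> g ` {..<k}"
          then obtain l where l: "l < k" "y = g l" by auto
          have "l < n" using l k by simp
          then have "y \<in> B" "ic y = l" using l bij_betw_apply[OF g] ic_g by auto
          then show "y \<in> {y \<in> B. (y, x) \<in> R \<and> (x, y) \<notin> R}"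
            unfolding R_def k_def using x l k_def by auto
        qed
      qed
      have inj_gk: "inj_on g {..<k}"
        using inj_on_subset[OF bij_betw_imp_inj_on[OF g], of "{..<k}"] k by auto
      have sum1: "(\<Sum>y\<in>{y \<in> B. (y, x) \<in> R \<and> (x, y) \<notin> R}. scl (of_int (a y)) (\<xi> y))
          = (\<Sum>l<k. scl (T l k) (h l))"
        unfolding set_eq sum.reindex[OF inj_gk]
      proof (intro sum.cong refl)
        fix l assume "l \<in> {..<k}"
        then have l: "l < n" using k by simp
        have gl: "g l \<in> B" using bij_betw_apply[OF g] l by simp
        show "((\<lambda>y. scl (of_int (a y)) (\<xi> y)) \<circ> g) l = scl (T l k) (h l)"
          by (simp add: \<xi>_def aT[OF gl] ic_g[OF l])
      qed
      show "w x = scl (of_int (sgn x)) (\<xi> x) + (\<Sum>y\<in>{y \<in> B. (y, x) \<in> R \<and> (x, y) \<notin> R}. scl (of_int (a y)) (\<xi> y))"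
      proof -
        have wexp: "w x = (\<Sum>l<n. scl (rep (w x) (h l)) (h l))"
          using rep_expand[OF fd h] unfolding rep_def by blast
        have repT: "rep (w x) (h l) = T l k" if l: "l < n" for l
        proof -
          have "p l < n" "q k < n" using permutes_in_image[OF p] permutes_in_image[OF q] l k by auto
          then show ?thesis using Aent unfolding T_def xg g_def h_def by simp
        qed
        have "w x = (\<Sum>l<n. scl (T l k) (h l))" using wexp repT by simp
        also have "\<dots> = (\<Sum>l<Suc k. scl (T l k) (h l))"
        proof (rule sum.mono_neutral_right)
          show "\<forall>l\<in>{..<n} - {..<Suc k}. scl (T l k) (h l) = 0"
            using H1 k unfolding T_def by auto
        qed (use k in auto)
        also have "\<dots> = scl (T k k) (h k) + (\<Sum>l<k. scl (T l k) (h l))" by simp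
        also have "T k k = of_int (sgn x)" using H2 k unfolding sgn_def k_def[symmetric] T_def by auto
        also have "h k = \<xi> x" unfolding \<xi>_def k_def by simp
        finally show ?thesis using sum1 by simp
      qed
    qed
  next
    assume "acts_by_bij_up_to_lower scl B w"
    then obtain \<xi> R sgn where \<xi>: "bij_betw \<xi> B B" and pre: "preorder_on B R"
      and sg: "\<forall>x\<in>B. sgn x = (1::int) \<or> sgn x = -1"
      and ha: "\<forall>x\<in>B. \<exists>a :: 'u \<Rightarrow> int.
          w x = scl (of_int (sgn x)) (\<xi> x) +
                (\<Sum>y\<in>{y\<in>B. (y, x) \<in> R \<and> (x, y) \<notin> R}. scl (of_int (a y)) (\<xi> y))"
      unfolding acts_by_bij_up_to_lower_def by blast
    define S where "S x = {y\<in>B. (y, x) \<in> R \<and> (x, y) \<notin> R}" for x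
    obtain a where a: "\<forall>x\<in>B. w x = scl (of_int (sgn x)) (\<xi> x) +
                (\<Sum>y\<in>S x. scl (of_int (a x y)) (\<xi> y))"
      using bchoice[OF ha] unfolding S_def by blast
    have Rrefl: "\<And>x. x \<in> B \<Longrightarrow> (x, x) \<in> R" using pre unfolding preorder_on_def refl_on_def by blast
    have Rtrans: "\<And>x y z. (x, y) \<in> R \<Longrightarrow> (y, z) \<in> R \<Longrightarrow> (x, z) \<in> R"
      using pre unfolding preorder_on_def trans_def by blast
    have notSx: "\<And>x. x \<notin> S x" unfolding S_def by auto
    have Ssub: "\<And>x y. y \<in> S x \<Longrightarrow> S y \<subseteq> S x"
      unfolding S_def using Rtrans by blast
    have Scard: "card (S y) < card (S x)" if "y \<in> S x" for x y
    proof (rule psubset_card_mono)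
      show "finite (S x)" unfolding S_def using fin by simp
      show "S y \<subset> S x" using Ssub[OF that] that notSx by blast
    qed
    define ie where "ie = inv_into {..<n} e"
    have ie: "bij_betw ie B {..<n}" unfolding ie_def using bij_betw_inv_into[OF eB] .
    have e_ie: "\<And>x. x \<in> B \<Longrightarrow> e (ie x) = x" unfolding ie_def using bij_betw_inv_into_right[OF eB] .
    have ien: "\<And>x. x \<in> B \<Longrightarrow> ie x < n" using bij_betw_apply[OF ie] by simp
    define key where "key x = card (S x) * n + ie x" for x
    have key_mod: "key x mod n = ie x" if "x \<in> B" for x
      unfolding key_def by (simp only: mod_mult_self3 mod_less[OF ien[OF that]])
    have inj_key: "inj_on key B"
    proof (rule inj_onI)
      fix x y assume xy: "x \<in> B" "y \<in> B" "key x = key y"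
      have "ie x = ie y" using key_mod[OF xy(1)] key_mod[OF xy(2)] xy(3) by metis
      then show "x = y" using e_ie[OF xy(1)] e_ie[OF xy(2)] by metis
    qed
    have key_less: "key y < key x" if "y \<in> S x" "x \<in> B" for x y
    proof -
      have yB: "y \<in> B" using that unfolding S_def by simp
      have "Suc (card (S y)) * n \<le> card (S x) * n"
        using Scard[OF that(1)] by (intro mult_le_mono1) simp
      moreover have "key y < Suc (card (S y)) * n"
        unfolding key_def using ien[OF yB] by simp
      moreover have "card (S x) * n \<le> key x" unfolding key_def by simp
      ultimately show ?thesis by linarith
    qed
    define pos where "pos x = card {y\<in>B. key y < key x}" for x
    have pos: "bij_betw pos B {..<n}" unfolding pos_def n_def using pos_exists(1)[OF fin inj_key] .
    have pos_less: "pos y < pos x" if "y \<in> S x" "x \<in> B" for x y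
    proof -
      have yB: "y \<in> B" using that unfolding S_def by simp
      show ?thesis unfolding pos_def using pos_exists(2)[OF fin inj_key that(2) yB key_less[OF that]] .
    qed
    define f where "f = inv_into B pos"
    have f: "bij_betw f {..<n} B" unfolding f_def using bij_betw_inv_into[OF pos] .
    have pos_f: "\<And>i. i < n \<Longrightarrow> pos (f i) = i" unfolding f_def using bij_betw_inv_into_right[OF pos] by simp
    have fB: "\<And>i. i < n \<Longrightarrow> f i \<in> B" using bij_betw_apply[OF f] by simp
    define p where "p i = (if i < n then ie (\<xi> (f i)) else i)" for i
    define q where "q j = (if j < n then ie (f j) else j)" for j
    have bp: "bij_betw (ie \<circ> \<xi> \<circ> f) {..<n} {..<n}"
      using bij_betw_trans[OF bij_betw_trans[OF f \<xi>] ie] by (simp add: comp_assoc)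
    have bq: "bij_betw (ie \<circ> f) {..<n} {..<n}"
      using bij_betw_trans[OF f ie] .
    have pp: "p permutes {..<n}"
    proof (rule bij_imp_permutes)
      show "bij_betw p {..<n} {..<n}"
        using bp by (rule bij_betw_cong[THEN iffD1, rotated]) (simp add: p_def)
    qed (simp add: p_def)
    have qp: "q permutes {..<n}"
    proof (rule bij_imp_permutes)
      show "bij_betw q {..<n} {..<n}"
        using bq by (rule bij_betw_cong[THEN iffD1, rotated]) (simp add: q_def)
    qed (simp add: q_def)
    have inj\<xi>: "inj_on \<xi> B" using bij_betw_imp_inj_on[OF \<xi>] .
    have \<xi>B: "\<And>x. x \<in> B \<Longrightarrow> \<xi> x \<in> B" using bij_betw_apply[OF \<xi>] .
    have entry: "A $$ (p i, q j) = of_int (sgn (f j)) * (if f i = f j then 1 else 0) +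
        (\<Sum>y\<in>S (f j). of_int (a (f j) y) * (if f i = y then 1 else 0))"
      if i: "i < n" and j: "j < n" for i j
    proof -
      have Sj: "S (f j) \<subseteq> B" unfolding S_def by auto
      have "A $$ (p i, q j) = rep (w (f j)) (\<xi> (f i))"
        using Aent[of "p i" "q j"] i j ien fB \<xi>B e_ie by (simp add: p_def q_def)
      also have "\<dots> = of_int (sgn (f j)) * (if \<xi> (f i) = \<xi> (f j) then 1 else 0) +
        (\<Sum>y\<in>S (f j). of_int (a (f j) y) * (if \<xi> (f i) = \<xi> y then 1 else 0))"
        using a fB[OF j] \<xi>B fB[OF i] Sj unfolding rep_def
        by (simp add: rep_add[OF fd] rep_scale[OF fd] rep_sum[OF fd] rep_basis[OF fd] subset_iff)
      also have "\<dots> = of_int (sgn (f j)) * (if f i = f j then 1 else 0) +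
        (\<Sum>y\<in>S (f j). of_int (a (f j) y) * (if f i = y then 1 else 0))"
        using inj\<xi> fB[OF i] fB[OF j] Sj unfolding inj_on_def by (auto intro!: sum.cong)
      finally show ?thesis .
    qed
    show Q unfolding Q_def
    proof (intro exI conjI allI impI)
      show "p permutes {..<n}" by fact
      show "q permutes {..<n}" by fact
      fix i assume i: "i < n"
      have z: "(\<Sum>y\<in>S (f i). of_int (a (f i) y) * (if f i = y then 1 else 0)) = (0::complex)"
        using notSx by (intro sum.neutral) auto
      show "A $$ (p i, q i) = 1 \<or> A $$ (p i, q i) = -1"
        using entry[OF i i] z sg fB[OF i] by auto
      fix j assume j: "j < n"
      show "A $$ (p i, q j) \<in> \<int>"
        unfolding entry[OF i j] by (intro Ints_add Ints_mult Ints_sum) auto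
      assume ji: "j < i"
      have ne: "f i \<noteq> f j"
      proof
        assume "f i = f j"
        then have "pos (f i) = pos (f j)" by simp
        then show False using pos_f[OF i] pos_f[OF j] ji by simp
      qed
      have nS: "f i \<notin> S (f j)" using pos_less[of "f i" "f j"] fB[OF j] pos_f i j ji by fastforce
      have "(\<Sum>y\<in>S (f j). of_int (a (f j) y) * (if f i = y then 1 else 0)) = (0::complex)"
        using nS by (intro sum.neutral) auto
      then show "A $$ (p i, q j) = 0" using entry[OF i j] ne by simp
    qed
  qed
  show ?thesis using LHS RHS by (simp add: n_def A_def)
qed

end
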